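(* Let $\mathbb{V}$ be a vector space of dimension $n\geq 3$ over a finite field $\mathbb{F}$, with a fixed basis $\mathcal{B}=\{v_1,\dots,v_n\}$, and let $\mathbb{IG}(\mathbb{V})$ be its nonzero component graph with respect to $\mathcal{B}$. Then $\operatorname{sdim}_M(\mathbb{IG}(\mathbb{V}))=|V(\mathbb{IG}(\mathbb{V}))|-2^{n-1}$.
   Context: For $a=a_1v_1+\dots+a_nv_n\in\mathbb{V}$, its skeleton is $S_{\mathcal{B}}(a)=\{v_i: a_i\neq 0\}$. The nonzero component graph $\mathbb{IG}(\mathbb{V})$ has vertex set $\mathbb{V}\setminus\{0\}$, distinct $a,b$ adjacent iff $S_{\mathcal{B}}(a)\cap S_{\mathcal{B}}(b)\neq\emptyset$. For a connected graph $G$, a vertex $w$ strongly resolves $u,v$ if some shortest $u$–$w$ path contains $v$ or some shortest $v$–$w$ path contains $u$; $\operatorname{sdim}_M(G)$ is the minimum size of a set $W$ such that every pair of distinct vertices is strongly resolved by some vertex of $W$. *)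

theory Defs
  imports Main
begin

definition gwalk :: "'v set \<Rightarrow> ('v \<Rightarrow> 'v \<Rightarrow> bool) \<Rightarrow> 'v list \<Rightarrow> bool" where
  "gwalk V E xs \<longleftrightarrow> xs \<noteq> [] \<and> set xs \<subseteq> V \<and>
     (\<forall>i. i + 1 < length xs \<longrightarrow> E (xs ! i) (xs ! (i + 1)))"

definition gdist :: "'v set \<Rightarrow> ('v \<Rightarrow> 'v \<Rightarrow> bool) \<Rightarrow> 'v \<Rightarrow> 'v \<Rightarrow> nat" where
  "gdist V E u v = (LEAST k. \<exists>xs. gwalk V E xs \<and> hd xs = u \<and> last xs = v \<and> length xs = k + 1)"

definition shortest_path :: "'v set \<Rightarrow> ('v \<Rightarrow> 'v \<Rightarrow> bool) \<Rightarrow> 'v \<Rightarrow> 'v \<Rightarrow> 'v list \<Rightarrow> bool" where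
  "shortest_path V E u v xs \<longleftrightarrow> gwalk V E xs \<and> hd xs = u \<and> last xs = v \<and>
     length xs = gdist V E u v + 1"

definition connected_graph :: "'v set \<Rightarrow> ('v \<Rightarrow> 'v \<Rightarrow> bool) \<Rightarrow> bool" where
  "connected_graph V E \<longleftrightarrow> V \<noteq> {} \<and>
     (\<forall>u\<in>V. \<forall>v\<in>V. \<exists>xs. gwalk V E xs \<and> hd xs = u \<and> last xs = v)"

definition strongly_resolves :: "'v set \<Rightarrow> ('v \<Rightarrow> 'v \<Rightarrow> bool) \<Rightarrow> 'v \<Rightarrow> 'v \<Rightarrow> 'v \<Rightarrow> bool" where
  "strongly_resolves V E w u v \<longleftrightarrow>
     (\<exists>p. shortest_path V E u w p \<and> v \<in> set p) \<or> (\<exists>p. shortest_path V E v w p \<and> u \<in> set p)"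

definition strong_resolving_set :: "'v set \<Rightarrow> ('v \<Rightarrow> 'v \<Rightarrow> bool) \<Rightarrow> 'v set \<Rightarrow> bool" where
  "strong_resolving_set V E W \<longleftrightarrow> W \<subseteq> V \<and>
     (\<forall>u\<in>V. \<forall>v\<in>V. u \<noteq> v \<longrightarrow> (\<exists>w\<in>W. strongly_resolves V E w u v))"

definition sdim :: "'v set \<Rightarrow> ('v \<Rightarrow> 'v \<Rightarrow> bool) \<Rightarrow> nat" where
  "sdim V E = Inf {card W | W. finite W \<and> strong_resolving_set V E W}"

text \<open>A vector of an n-dimensional space over F is identified with its coordinate
  vector a = (a_0,...,a_{n-1}) w.r.t. the fixed basis, i.e. a function nat => F
  vanishing outside {0..<n}.\<close>
definition coord_space :: "nat \<Rightarrow> (nat \<Rightarrow> 'a::zero) set" where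
  "coord_space n = {a. \<forall>i. n \<le> i \<longrightarrow> a i = 0}"

definition skeleton :: "(nat \<Rightarrow> 'a::zero) \<Rightarrow> nat set" where
  "skeleton a = {i. a i \<noteq> 0}"

definition IG_vertices :: "nat \<Rightarrow> (nat \<Rightarrow> 'a::zero) set" where
  "IG_vertices n = coord_space n - {\<lambda>_. 0}"

definition IG_adj :: "(nat \<Rightarrow> 'a::zero) \<Rightarrow> (nat \<Rightarrow> 'a) \<Rightarrow> bool" where
  "IG_adj a b \<longleftrightarrow> a \<noteq> b \<and> skeleton a \<inter> skeleton b \<noteq> {}"

end

theory Submission
  imports Defs
begin

section \<open>Generic graph lemmas\<close>

lemma gwalk_prefix:
  assumes "gwalk V E (xs @ ys)" "xs \<noteq> []"
  shows "gwalk V E xs"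
  using assms unfolding gwalk_def
proof (intro conjI allI impI)
  fix i assume h: "xs @ ys \<noteq> [] \<and> set (xs @ ys) \<subseteq> V \<and>
     (\<forall>i. i + 1 < length (xs @ ys) \<longrightarrow> E ((xs @ ys) ! i) ((xs @ ys) ! (i + 1)))"
    "i + 1 < length xs"
  then have "E ((xs @ ys) ! i) ((xs @ ys) ! (i + 1))" by auto
  then show "E (xs ! i) (xs ! (i + 1))" using h(2) by (simp add: nth_append)
qed auto

lemma gwalk_suffix:
  assumes "gwalk V E (xs @ ys)" "ys \<noteq> []"
  shows "gwalk V E ys"
  using assms unfolding gwalk_def
proof (intro conjI allI impI)
  fix i assume h: "xs @ ys \<noteq> [] \<and> set (xs @ ys) \<subseteq> V \<and>
     (\<forall>i. i + 1 < length (xs @ ys) \<longrightarrow> E ((xs @ ys) ! i) ((xs @ ys) ! (i + 1)))"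
    "i + 1 < length ys"
  have "length xs + i + 1 < length (xs @ ys)" using h(2) by simp
  then have "E ((xs @ ys) ! (length xs + i)) ((xs @ ys) ! (length xs + i + 1))" using h(1) by blast
  moreover have "(xs @ ys) ! (length xs + i) = ys ! i" by (simp add: nth_append)
  moreover have "(xs @ ys) ! (length xs + i + 1) = ys ! (i + 1)" by (simp add: nth_append)
  ultimately show "E (ys ! i) (ys ! (i + 1))" by simp
qed auto

lemma walk_dist:
  assumes "gwalk V E xs" "hd xs = u" "last xs = v"
  shows "gdist V E u v \<le> length xs - 1"
proof -
  have "xs \<noteq> []" using assms(1) unfolding gwalk_def by auto
  then have "\<exists>ys. gwalk V E ys \<and> hd ys = u \<and> last ys = v \<and> length ys = (length xs - 1) + 1"
    using assms by (intro exI[of _ xs]) auto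
  then show ?thesis unfolding gdist_def by (rule Least_le)
qed

lemma exists_sp:
  assumes "gwalk V E xs" "hd xs = u" "last xs = v"
  shows "\<exists>p. shortest_path V E u v p"
proof -
  have "xs \<noteq> []" using assms(1) unfolding gwalk_def by auto
  then have "\<exists>k ys. gwalk V E ys \<and> hd ys = u \<and> last ys = v \<and> length ys = k + 1"
    using assms by (intro exI[of _ "length xs - 1"] exI[of _ xs]) auto
  then have "\<exists>ys. gwalk V E ys \<and> hd ys = u \<and> last ys = v \<and> length ys = gdist V E u v + 1"
    unfolding gdist_def by (rule LeastI_ex[where P="\<lambda>k. \<exists>ys. gwalk V E ys \<and> hd ys = u \<and> last ys = v \<and> length ys = k + 1"]) 
  then show ?thesis unfolding shortest_path_def by blast
qed

lemma dist0:
  assumes "gwalk V E xs" "hd xs = u" "last xs = v" "gdist V E u v = 0"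
  shows "u = v"
proof -
  obtain p where p: "shortest_path V E u v p" using exists_sp[OF assms(1-3)] by blast
  then have "length p = 1" "hd p = u" "last p = v" using assms(4) unfolding shortest_path_def by auto
  then show ?thesis by (cases p) auto
qed

lemma dist1:
  assumes "gwalk V E xs" "hd xs = u" "last xs = v" "gdist V E u v = 1"
  shows "E u v"
proof -
  obtain p where p: "shortest_path V E u v p" using exists_sp[OF assms(1-3)] by blast
  then have l: "length p = 2" "hd p = u" "last p = v" "gwalk V E p"
    using assms(4) unfolding shortest_path_def by auto
  then obtain a b where "p = [a, b]"
    by (cases p; cases "tl p") auto
  then show ?thesis using l unfolding gwalk_def by auto
qed

lemma mmd:
  assumes conn: "\<forall>a\<in>V. \<forall>b\<in>V. \<exists>xs. gwalk V E xs \<and> hd xs = a \<and> last xs = b \<and> length xs \<le> 3"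
    and sp: "shortest_path V E u w p" and vp: "v \<in> set p" and "v \<noteq> u" "v \<noteq> w"
  shows "E u v \<and> E v w \<and> \<not> E u w"
proof -
  have gp: "gwalk V E p" "hd p = u" "last p = w" "length p = gdist V E u w + 1"
    using sp unfolding shortest_path_def by auto
  have pV: "set p \<subseteq> V" using gp(1) unfolding gwalk_def by auto
  have uV: "u \<in> V" "w \<in> V" "v \<in> V" using gp pV vp
    by (auto, metis gwalk_def hd_in_set subsetD, metis gwalk_def last_in_set subsetD)
  obtain ys zs where pe: "p = ys @ v # zs" using vp split_list by metis
  have ysne: "ys \<noteq> []" using pe gp(2) assms(4) by auto
  have w1: "gwalk V E (ys @ [v])" using gwalk_prefix[of V E "ys @ [v]" zs] gp(1) pe by simp
  have w1h: "hd (ys @ [v]) = u" using ysne gp(2) pe by (cases ys) auto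
  have w2: "gwalk V E (v # zs)" using gwalk_suffix[of V E ys "v # zs"] gp(1) pe by simp
  have w2l: "last (v # zs) = w" using gp(3) pe by (cases zs) auto
  have d1: "gdist V E u v \<le> length ys" using walk_dist[OF w1 w1h] by simp
  have d2: "gdist V E v w \<le> length zs" using walk_dist[OF w2 _ w2l] by simp
  have d3: "gdist V E u v \<noteq> 0" using dist0[OF w1 w1h] assms(4) by auto
  have d4: "gdist V E v w \<noteq> 0" using dist0[OF w2 _ w2l] assms(5) by auto
  obtain xs where xs: "gwalk V E xs" "hd xs = u" "last xs = w" "length xs \<le> 3"
    using conn uV by blast
  have d5: "gdist V E u w \<le> 2" using walk_dist[OF xs(1-3)] xs(4) by simp
  have lp: "length p = length ys + length zs + 1" using pe by simp
  have e1: "gdist V E u v = 1" "gdist V E v w = 1" "gdist V E u w = 2"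
    using d1 d2 d3 d4 d5 lp gp(4) by linarith+
  have "E u v" using dist1[OF w1 w1h] e1 by simp
  moreover have "E v w" using dist1[OF w2 _ w2l] e1 by simp
  moreover have "\<not> E u w"
  proof
    assume "E u w"
    then have "gwalk V E [u, w]" using uV unfolding gwalk_def by auto
    then have "gdist V E u w \<le> 1" using walk_dist[of V E "[u,w]"] by simp
    then show False using e1 by simp
  qed
  ultimately show ?thesis by blast
qed

section \<open>The nonzero component graph\<close>

definition ind :: "nat set \<Rightarrow> nat \<Rightarrow> 'a::field" where
  "ind S = (\<lambda>i. if i \<in> S then 1 else 0)"

definition fullv :: "nat \<Rightarrow> nat \<Rightarrow> 'a::field" where
  "fullv n = ind {..<n}"

lemma skeleton_ind: "skeleton (ind S :: nat \<Rightarrow> 'a::field) = S"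
  unfolding skeleton_def ind_def by auto

lemma ind_inj: "inj (ind :: nat set \<Rightarrow> nat \<Rightarrow> 'a::field)"
  by (metis injI skeleton_ind)

lemma ind_V:
  assumes "S \<subseteq> {..<n}" "S \<noteq> {}"
  shows "(ind S :: nat \<Rightarrow> 'a::field) \<in> IG_vertices n"
proof -
  have "(ind S :: nat \<Rightarrow> 'a) \<noteq> (\<lambda>_. 0)"
  proof
    assume "(ind S :: nat \<Rightarrow> 'a) = (\<lambda>_. 0)"
    then have "skeleton (ind S :: nat \<Rightarrow> 'a) = {}" unfolding skeleton_def by auto
    then show False using assms(2) skeleton_ind by metis
  qed
  moreover have "(ind S :: nat \<Rightarrow> 'a) \<in> coord_space n"
    using assms(1) unfolding coord_space_def ind_def by auto
  ultimately show ?thesis unfolding IG_vertices_def by auto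
qed

lemma skel_V:
  assumes "a \<in> IG_vertices n"
  shows "skeleton a \<noteq> {}" "skeleton a \<subseteq> {..<n}"
  using assms unfolding IG_vertices_def coord_space_def skeleton_def
  by (auto simp: fun_eq_iff, meson not_le)

lemma IG_conn:
  fixes a b :: "nat \<Rightarrow> 'a::field"
  assumes "a \<in> IG_vertices n" "b \<in> IG_vertices n"
  shows "\<exists>xs. gwalk (IG_vertices n) IG_adj xs \<and> hd xs = a \<and> last xs = b \<and> length xs \<le> 3"
proof (cases "a = b")
  case True
  then show ?thesis using assms by (intro exI[of _ "[a]"]) (auto simp: gwalk_def)
next
  case ne: False
  show ?thesis
  proof (cases "IG_adj a b")
    case True
    then show ?thesis using assms by (intro exI[of _ "[a,b]"]) (auto simp: gwalk_def)
  next
    case False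
    then have dis: "skeleton a \<inter> skeleton b = {}" using ne unfolding IG_adj_def by auto
    let ?f = "fullv n :: nat \<Rightarrow> 'a"
    have sa: "skeleton a \<noteq> {}" "skeleton a \<subseteq> {..<n}" "skeleton b \<noteq> {}" "skeleton b \<subseteq> {..<n}"
      using skel_V assms by blast+
    have sf: "skeleton ?f = {..<n}" unfolding fullv_def by (rule skeleton_ind)
    have fV: "?f \<in> IG_vertices n" unfolding fullv_def using sa by (intro ind_V) auto
    have "a \<noteq> ?f" using dis sa sf by auto
    moreover have "b \<noteq> ?f" using dis sa sf by auto
    ultimately have "IG_adj a ?f" "IG_adj ?f b" using sa sf unfolding IG_adj_def by auto
    then show ?thesis using assms fV
      by (intro exI[of _ "[a, ?f, b]"]) (auto simp: gwalk_def nth_Cons split: nat.splits)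
  qed
qed

lemma IG_conn_all:
  "\<forall>a\<in>(IG_vertices n :: (nat \<Rightarrow> 'a::field) set). \<forall>b\<in>IG_vertices n.
     \<exists>xs. gwalk (IG_vertices n) IG_adj xs \<and> hd xs = a \<and> last xs = b \<and> length xs \<le> 3"
  using IG_conn by blast

lemma independent:
  fixes W :: "(nat \<Rightarrow> 'a::field) set"
  assumes srs: "strong_resolving_set (IG_vertices n) IG_adj W"
    and x: "x \<in> IG_vertices n - W" and y: "y \<in> IG_vertices n - W" and xy: "x \<noteq> y"
  shows "skeleton x \<noteq> skeleton y \<and> skeleton x \<inter> skeleton y \<noteq> {}"
proof -
  obtain w where w: "w \<in> W" "strongly_resolves (IG_vertices n) IG_adj w x y"
    using srs x y xy unfolding strong_resolving_set_def by blast
  have wx: "w \<noteq> x" "w \<noteq> y" using w x y by auto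
  note C = IG_conn_all[where n=n, where 'a='a]
  from w(2) show ?thesis unfolding strongly_resolves_def
  proof (elim disjE exE conjE)
    fix p assume "shortest_path (IG_vertices n) IG_adj x w p" "y \<in> set p"
    then have "IG_adj x y \<and> IG_adj y w \<and> \<not> IG_adj x w"
      using mmd[OF C] xy wx by metis
    then show ?thesis unfolding IG_adj_def using wx by auto
  next
    fix p assume "shortest_path (IG_vertices n) IG_adj y w p" "x \<in> set p"
    then have "IG_adj y x \<and> IG_adj x w \<and> \<not> IG_adj y w"
      using mmd[OF C] xy wx by metis
    then show ?thesis unfolding IG_adj_def using wx by auto
  qed
qed

lemma intersecting_bound:
  assumes A: "A \<subseteq> Pow {..<n}" and int: "\<forall>S\<in>A. \<forall>T\<in>A. S \<inter> T \<noteq> {}" and n: "n \<ge> 1"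
  shows "card A \<le> 2 ^ (n - 1)"
proof -
  let ?C = "(\<lambda>S. {..<n} - S) ` A"
  have inj: "inj_on (\<lambda>S. {..<n} - S) A"
  proof (rule inj_onI)
    fix S T assume h: "S \<in> A" "T \<in> A" "{..<n} - S = {..<n} - T"
    then have "S \<subseteq> {..<n}" "T \<subseteq> {..<n}" using A by auto
    then show "S = T" using h(3) by (metis Diff_Diff_Int inf.absorb_iff2)
  qed
  have fA: "finite A" using A finite_subset by blast
  have cC: "card ?C = card A" using card_image[OF inj] .
  have disj: "A \<inter> ?C = {}"
  proof (rule ccontr)
    assume "A \<inter> ?C \<noteq> {}"
    then obtain S T where "S \<in> A" "T \<in> A" "S = {..<n} - T" by blast
    then show False using int by auto
  qed
  have sub: "A \<union> ?C \<subseteq> Pow {..<n}" using A by auto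
  have e1: "card (A \<union> ?C) = card A + card ?C" using card_Un_disjoint[OF fA finite_imageI[OF fA] disj] by simp
  have e2: "card (A \<union> ?C) \<le> card (Pow {..<n :: nat})" using sub by (intro card_mono) auto
  have e3: "card (Pow {..<n :: nat}) = 2 ^ n" by (simp add: card_Pow)
  have "2 * card A \<le> 2 ^ n" using cC e1 e2 e3 by simp
  moreover have "(2::nat) ^ n = 2 * 2 ^ (n - 1)" using n by (cases n) auto
  ultimately show ?thesis by simp
qed

lemma finite_coord: "finite (coord_space n :: (nat \<Rightarrow> 'a::{zero,finite}) set)"
proof -
  let ?f = "\<lambda>xs i. if i < n then xs ! i else (0::'a)"
  have "coord_space n \<subseteq> ?f ` {xs. set xs \<subseteq> UNIV \<and> length xs = n}"
  proof
    fix a :: "nat \<Rightarrow> 'a" assume "a \<in> coord_space n"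
    then have "a = ?f (map a [0..<n])" unfolding coord_space_def by (auto simp: fun_eq_iff)
    moreover have "map a [0..<n] \<in> {xs. set xs \<subseteq> UNIV \<and> length xs = n}" by simp
    ultimately show "a \<in> ?f ` {xs. set xs \<subseteq> UNIV \<and> length xs = n}" by (rule image_eqI)
  qed
  moreover have "finite {xs. set xs \<subseteq> (UNIV::'a set) \<and> length xs = n}"
    by (rule finite_lists_length_eq) simp
  ultimately show ?thesis by (meson finite_imageI finite_subset)
qed

lemma finite_V: "finite (IG_vertices n :: (nat \<Rightarrow> 'a::{field,finite}) set)"
  unfolding IG_vertices_def using finite_coord by blast

lemma lower_bound:
  fixes W :: "(nat \<Rightarrow> 'a::{field,finite}) set"
  assumes srs: "strong_resolving_set (IG_vertices n) IG_adj W" and fW: "finite W" and n: "n \<ge> 1"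
  shows "card (IG_vertices n :: (nat \<Rightarrow> 'a) set) - 2 ^ (n - 1) \<le> card W"
proof -
  let ?V = "IG_vertices n :: (nat \<Rightarrow> 'a) set"
  let ?R = "?V - W"
  have inj: "inj_on skeleton ?R"
  proof (rule inj_onI)
    fix x y assume h: "x \<in> ?R" "y \<in> ?R" "skeleton x = skeleton y"
    show "x = y"
    proof (rule ccontr)
      assume "x \<noteq> y"
      then show False using independent[OF srs h(1) h(2)] h(3) by simp
    qed
  qed
  have A: "skeleton ` ?R \<subseteq> Pow {..<n}"
  proof
    fix S assume "S \<in> skeleton ` ?R"
    then obtain x where "x \<in> ?R" "S = skeleton x" by blast
    then show "S \<in> Pow {..<n}" using skel_V(2)[of x n] by simp
  qed
  have int: "\<forall>S\<in>skeleton ` ?R. \<forall>T\<in>skeleton ` ?R. S \<inter> T \<noteq> {}"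
  proof (intro ballI)
    fix S T assume "S \<in> skeleton ` ?R" "T \<in> skeleton ` ?R"
    then obtain x y where h: "x \<in> ?R" "S = skeleton x" "y \<in> ?R" "T = skeleton y" by blast
    show "S \<inter> T \<noteq> {}"
    proof (cases "x = y")
      case True
      then show ?thesis using h skel_V(1)[of x n] by simp
    next
      case False
      then show ?thesis using h independent[OF srs h(1) h(3)] by simp
    qed
  qed
  have "card ?R = card (skeleton ` ?R)" using card_image[OF inj] by simp
  also have "\<dots> \<le> 2 ^ (n - 1)" using intersecting_bound[OF A int n] .
  finally have R: "card ?R \<le> 2 ^ (n - 1)" .
  have "card ?V \<le> card (W \<union> ?R)" using finite_V fW by (intro card_mono) auto
  also have "\<dots> \<le> card W + card ?R" by (rule card_Un_le)
  finally show ?thesis using R by linarith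
qed

lemma card_P0:
  assumes n: "n \<ge> 1"
  shows "card {S. S \<subseteq> {..<n} \<and> (0::nat) \<in> S} = 2 ^ (n - 1)"
proof -
  have "bij_betw (insert 0) (Pow {1..<n}) {S. S \<subseteq> {..<n} \<and> (0::nat) \<in> S}"
  proof (rule bij_betw_imageI)
    show "inj_on (insert 0) (Pow {1..<n})"
    proof (rule inj_onI)
      fix S T assume h: "S \<in> Pow {1..<n}" "T \<in> Pow {1..<n}" "insert (0::nat) S = insert 0 T"
      have "S = insert 0 S - {0}" "T = insert 0 T - {0}" using h(1,2) by auto
      then show "S = T" using h(3) by metis
    qed
    show "insert 0 ` Pow {1..<n} = {S. S \<subseteq> {..<n} \<and> (0::nat) \<in> S}"
    proof (rule set_eqI, rule iffI)
      fix S assume "S \<in> insert 0 ` Pow {1..<n}"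
      then show "S \<in> {S. S \<subseteq> {..<n} \<and> (0::nat) \<in> S}" using n by auto
    next
      fix S assume h: "S \<in> {S. S \<subseteq> {..<n} \<and> (0::nat) \<in> S}"
      then have "S = insert 0 (S - {0})" "S - {0} \<in> Pow {1..<n}" by auto
      then show "S \<in> insert 0 ` Pow {1..<n}" by (metis imageI)
    qed
  qed
  then have "card {S. S \<subseteq> {..<n} \<and> (0::nat) \<in> S} = card (Pow {1..<n})"
    by (metis bij_betw_same_card)
  also have "\<dots> = 2 ^ (n - 1)" by (simp add: card_Pow)
  finally show ?thesis .
qed

definition Iset :: "nat \<Rightarrow> (nat \<Rightarrow> 'a::field) set" where
  "Iset n = ind ` {S. S \<subseteq> {..<n} \<and> (0::nat) \<in> S}"

lemma Iset_sub: "Iset n \<subseteq> IG_vertices n"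
  unfolding Iset_def by (auto intro!: ind_V)

lemma card_Iset: "n \<ge> 1 \<Longrightarrow> card (Iset n :: (nat \<Rightarrow> 'a::field) set) = 2 ^ (n - 1)"
proof -
  assume n: "n \<ge> 1"
  have "inj_on (ind :: nat set \<Rightarrow> nat \<Rightarrow> 'a) {S. S \<subseteq> {..<n} \<and> (0::nat) \<in> S}"
    by (rule inj_on_subset[OF ind_inj]) simp
  then show ?thesis unfolding Iset_def using card_P0[OF n] by (simp add: card_image)
qed

definition unitv :: "nat \<Rightarrow> nat \<Rightarrow> 'a::field" where
  "unitv i = ind {i}"

lemma resolve_self:
  fixes u v :: "nat \<Rightarrow> 'a::field"
  assumes "u \<in> IG_vertices n" "v \<in> IG_vertices n"
  shows "strongly_resolves (IG_vertices n) IG_adj v u v"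
proof -
  obtain xs where "gwalk (IG_vertices n) IG_adj xs" "hd xs = u" "last xs = v"
    using IG_conn[OF assms] by blast
  then obtain p where p: "shortest_path (IG_vertices n) IG_adj u v p" using exists_sp by metis
  then have "p \<noteq> []" "last p = v" unfolding shortest_path_def gwalk_def by auto
  then have "v \<in> set p" using last_in_set by metis
  then show ?thesis unfolding strongly_resolves_def using p by blast
qed

lemma resolve_self2:
  fixes u v :: "nat \<Rightarrow> 'a::field"
  assumes "u \<in> IG_vertices n" "v \<in> IG_vertices n"
  shows "strongly_resolves (IG_vertices n) IG_adj u u v"
proof -
  obtain xs where "gwalk (IG_vertices n) IG_adj xs" "hd xs = v" "last xs = u"
    using IG_conn[OF assms(2,1)] by blast
  then obtain p where p: "shortest_path (IG_vertices n) IG_adj v u p" using exists_sp by metis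
  then have "p \<noteq> []" "last p = u" unfolding shortest_path_def gwalk_def by auto
  then have "u \<in> set p" using last_in_set by metis
  then show ?thesis unfolding strongly_resolves_def using p by blast
qed

lemma resolve_pair:
  fixes S T :: "nat set"
  assumes S: "S \<subseteq> {..<n}" "0 \<in> S" and T: "T \<subseteq> {..<n}" "0 \<in> T"
    and i: "i \<in> T" "i \<notin> S"
  shows "\<exists>p. shortest_path (IG_vertices n) IG_adj (ind S :: nat \<Rightarrow> 'a::field) (unitv i) p
           \<and> ind T \<in> set p"
proof -
  let ?u = "ind S :: nat \<Rightarrow> 'a" and ?v = "ind T :: nat \<Rightarrow> 'a" and ?w = "unitv i :: nat \<Rightarrow> 'a"
  have sk: "skeleton ?u = S" "skeleton ?v = T" "skeleton ?w = {i}"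
    unfolding unitv_def by (simp_all add: skeleton_ind)
  have inz: "i \<noteq> 0" using i(2) S(2) by metis
  have V: "?u \<in> IG_vertices n" "?v \<in> IG_vertices n" "?w \<in> IG_vertices n"
    unfolding unitv_def using S T i by (auto intro!: ind_V)
  have "?u \<noteq> ?v" using sk i by metis
  then have a1: "IG_adj ?u ?v" unfolding IG_adj_def using sk S T by auto
  have "?v \<noteq> ?w" using sk inz T by auto
  then have a2: "IG_adj ?v ?w" unfolding IG_adj_def using sk i by auto
  have uw: "?u \<noteq> ?w" using sk i by auto
  have na: "\<not> IG_adj ?u ?w" unfolding IG_adj_def using sk i by auto
  have gw: "gwalk (IG_vertices n) IG_adj [?u, ?v, ?w]"
    unfolding gwalk_def using V a1 a2 by (auto simp: nth_Cons split: nat.splits)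
  have "gdist (IG_vertices n) IG_adj ?u ?w \<le> length [?u, ?v, ?w] - 1" by (rule walk_dist[OF gw]) simp_all
  then have d2: "gdist (IG_vertices n) IG_adj ?u ?w \<le> 2" by simp
  have "gdist (IG_vertices n) IG_adj ?u ?w \<noteq> 0" using dist0[OF gw] uw by auto
  moreover have "gdist (IG_vertices n) IG_adj ?u ?w \<noteq> 1" using dist1[OF gw] na by auto
  ultimately have "gdist (IG_vertices n) IG_adj ?u ?w = 2" using d2 by linarith
  then have "shortest_path (IG_vertices n) IG_adj ?u ?w [?u, ?v, ?w]"
    unfolding shortest_path_def using gw by simp
  then show ?thesis by (intro exI[of _ "[?u, ?v, ?w]"]) simp
qed

lemma W0_resolving:
  assumes n: "n \<ge> 1"
  shows "strong_resolving_set (IG_vertices n) IG_adj (IG_vertices n - (Iset n :: (nat \<Rightarrow> 'a::field) set))"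
  unfolding strong_resolving_set_def
proof (intro conjI ballI impI)
  show "IG_vertices n - Iset n \<subseteq> IG_vertices n" by blast
next
  fix u v :: "nat \<Rightarrow> 'a" assume u: "u \<in> IG_vertices n" and v: "v \<in> IG_vertices n" and uv: "u \<noteq> v"
  show "\<exists>w\<in>IG_vertices n - Iset n. strongly_resolves (IG_vertices n) IG_adj w u v"
  proof (cases "u \<in> Iset n")
    case False
    then show ?thesis using resolve_self2[OF u v] u by blast
  next
    case uI: True
    show ?thesis
    proof (cases "v \<in> Iset n")
      case False
      then show ?thesis using resolve_self[OF u v] v by blast
    next
      case vI: True
      obtain S where S: "S \<subseteq> {..<n}" "0 \<in> S" "u = ind S" using uI unfolding Iset_def by blast
      obtain T where T: "T \<subseteq> {..<n}" "0 \<in> T" "v = ind T" using vI unfolding Iset_def by blast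
      have "S \<noteq> T" using S T uv by auto
      then consider (a) i where "i \<in> T" "i \<notin> S" | (b) i where "i \<in> S" "i \<notin> T" by blast
      then show ?thesis
      proof cases
        case (a i)
        have wV: "(unitv i :: nat \<Rightarrow> 'a) \<in> IG_vertices n" unfolding unitv_def using a T by (auto intro!: ind_V)
        have "(unitv i :: nat \<Rightarrow> 'a) \<notin> Iset n"
        proof
          assume "(unitv i :: nat \<Rightarrow> 'a) \<in> Iset n"
          then obtain R where "0 \<in> R" "unitv i = (ind R :: nat \<Rightarrow> 'a)" unfolding Iset_def by blast
          then have "{i} = R" unfolding unitv_def by (metis skeleton_ind)
          then show False using \<open>0 \<in> R\<close> a S by auto
        qed
        moreover have "strongly_resolves (IG_vertices n) IG_adj (unitv i) u v"
          using resolve_pair[OF S(1,2) T(1,2) a] S T unfolding strongly_resolves_def by blast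
        ultimately show ?thesis using wV by blast
      next
        case (b i)
        have wV: "(unitv i :: nat \<Rightarrow> 'a) \<in> IG_vertices n" unfolding unitv_def using b S by (auto intro!: ind_V)
        have "(unitv i :: nat \<Rightarrow> 'a) \<notin> Iset n"
        proof
          assume "(unitv i :: nat \<Rightarrow> 'a) \<in> Iset n"
          then obtain R where "0 \<in> R" "unitv i = (ind R :: nat \<Rightarrow> 'a)" unfolding Iset_def by blast
          then have "{i} = R" unfolding unitv_def by (metis skeleton_ind)
          then show False using \<open>0 \<in> R\<close> b T by auto
        qed
        moreover have "strongly_resolves (IG_vertices n) IG_adj (unitv i) u v"
          using resolve_pair[OF T(1,2) S(1,2) b] S T unfolding strongly_resolves_def by blast
        ultimately show ?thesis using wV by blast
      qed
    qed
  qed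
qed

theorem theorem4p16:
  fixes n :: nat
  assumes "n \<ge> 3"
  shows "sdim (IG_vertices n :: (nat \<Rightarrow> 'a::{field,finite}) set) IG_adj
           = card (IG_vertices n :: (nat \<Rightarrow> 'a) set) - 2 ^ (n - 1)"
proof -
  have n: "n \<ge> 1" using assms by simp
  let ?V = "IG_vertices n :: (nat \<Rightarrow> 'a) set"
  let ?W = "?V - Iset n"
  have fI: "finite (Iset n :: (nat \<Rightarrow> 'a) set)" using finite_subset[OF Iset_sub finite_V] .
  have "card ?W = card ?V - card (Iset n :: (nat \<Rightarrow> 'a) set)"
    by (rule card_Diff_subset[OF fI Iset_sub])
  then have cW: "card ?W = card ?V - 2 ^ (n - 1)" using card_Iset[OF n, where 'a='a] by simp
  have mem: "card ?W \<in> {card W | W. finite W \<and> strong_resolving_set ?V IG_adj W}"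
    using W0_resolving[OF n] finite_V by blast
  have "Inf {card W | W. finite W \<and> strong_resolving_set ?V IG_adj W} = card ?W"
  proof (rule cInf_eq_minimum[OF mem])
    fix y assume "y \<in> {card W | W. finite W \<and> strong_resolving_set ?V IG_adj W}"
    then obtain W where "y = card W" "finite W" "strong_resolving_set ?V IG_adj W" by blast
    then show "card ?W \<le> y" using lower_bound[OF _ _ n] cW by metis
  qed
  then show ?thesis unfolding sdim_def using cW by simp
qed

end
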